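(* Let $(\xi_j)_{j=1}^\infty$ be an i.i.d. sequence of strictly positive random variables, let $\xi$ have the common distribution, and let \[ Y = 1 + \xi_1 + \xi_1\xi_2 + \xi_1\xi_2\xi_3 + \cdots = \sum_{k=0}^{\infty} \prod_{j=1}^{k} \xi_j \] (empty product equal to $1$). For real $q$ write $\mu_q = \mathbb{E}(\xi^q)$. Then for every real $p \ge 1$: $\mathbb{E}(Y^p) < \infty$ if and only if $\mu_p < 1$. Moreover, if $\mu_p<1$, then $\mu_q < 1$ for every real $1 \le q \le p$ and \[ \mathbb{E}(Y^p) \le \bigl(1 - \mu_p^{1/p}\bigr)^{-p}; \] and if in addition $p \ge 1$ is an integer, then \[ \mathbb{E}(Y^p) = \frac{1}{1-\mu_p} \sum_{k=0}^{p-1} \binom{p}{k} \mu_k \, \mathbb{E}(Y^k). \] *)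

theory Defs
  imports "HOL-Probability.Probability"
begin

text \<open>The perpetuity Y = sum over k of the product of xi_1 ... xi_k (empty product 1),
  as an extended nonnegative real (it may diverge). Indices are shifted: xi 0 is xi_1.\<close>
definition perp :: "(nat \<Rightarrow> 'a \<Rightarrow> real) \<Rightarrow> 'a \<Rightarrow> ennreal" where
  "perp xi \<omega> = (\<Sum>k. ennreal (\<Prod>j<k. xi j \<omega>))"

definition ennpow :: "ennreal \<Rightarrow> real \<Rightarrow> ennreal" where
  "ennpow x p = (if p = 0 then 1 else if x = \<infinity> then \<infinity> else ennreal (enn2real x powr p))"

text \<open>mu_q = E(xi^q) for the common distribution (represented by xi 0).\<close>
definition mom :: "'a measure \<Rightarrow> (nat \<Rightarrow> 'a \<Rightarrow> real) \<Rightarrow> real \<Rightarrow> ennreal" where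
  "mom M xi q = (\<integral>\<^sup>+ \<omega>. ennreal (xi 0 \<omega> powr q) \<partial>M)"

definition perp_mom :: "'a measure \<Rightarrow> (nat \<Rightarrow> 'a \<Rightarrow> real) \<Rightarrow> real \<Rightarrow> ennreal" where
  "perp_mom M xi p = (\<integral>\<^sup>+ \<omega>. ennpow (perp xi \<omega>) p \<partial>M)"

end

theory Submission
  imports Defs
begin


lemma ennpow_nat: "ennpow x (real n) = x ^ n"
proof (cases "n = 0")
  case True then show ?thesis by (simp add: ennpow_def)
next
  case False
  show ?thesis
  proof (cases "x = \<infinity>")
    case True with False show ?thesis by (simp add: ennpow_def)
  next
    case fin: False
    then obtain r where r: "x = ennreal r" "r \<ge> 0" by (cases x) auto
    have "r powr real n = r ^ n"
    proof (cases "r = 0")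
      case True with False show ?thesis by simp
    next
      case False with r show ?thesis by (simp add: powr_realpow)
    qed
    with False r show ?thesis by (simp add: ennpow_def ennreal_power)
  qed
qed

lemma ennpow_ennreal: "p \<noteq> 0 \<Longrightarrow> r \<ge> 0 \<Longrightarrow> ennpow (ennreal r) p = ennreal (r powr p)"
  by (simp add: ennpow_def)

lemma ennpow_mono:
  assumes "x \<le> y" "p \<ge> 0" shows "ennpow x p \<le> ennpow y p"
proof (cases "p = 0")
  case True then show ?thesis by (simp add: ennpow_def)
next
  case p: False
  show ?thesis
  proof (cases "y = \<infinity>")
    case True with p show ?thesis by (simp add: ennpow_def)
  next
    case False
    then obtain b where b: "y = ennreal b" "b \<ge> 0" by (cases y) auto
    with assms obtain a where a: "x = ennreal a" "a \<ge> 0" "a \<le> b"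
      by (cases x) (auto simp: ennreal_le_iff top_unique)
    show ?thesis using a b p assms by (simp add: ennpow_def powr_mono2 ennreal_leI)
  qed
qed

lemma ennpow_SUP_le:
  assumes p: "p > 0" and s: "\<And>n. s n \<ge> 0"
    and le: "\<And>n. ennpow (ennreal (s n)) p \<le> R"
  shows "ennpow (SUP n. ennreal (s n)) p \<le> R"
proof (cases "R = \<infinity>")
  case True then show ?thesis by simp
next
  case False
  then obtain r where r: "R = ennreal r" "r \<ge> 0" by (cases R) auto
  have sn: "s n \<le> r powr (1/p)" for n
  proof -
    have "ennreal (s n powr p) \<le> ennreal r" using le[of n] p s[of n] r by (simp add: ennpow_def)
    then have "s n powr p \<le> r" using r by (simp add: ennreal_le_iff)
    then have "(s n powr p) powr (1/p) \<le> r powr (1/p)" using p by (intro powr_mono2) auto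
    then show ?thesis using p s[of n] by (simp add: powr_powr)
  qed
  have "(SUP n. ennreal (s n)) \<le> ennreal (r powr (1/p))"
    by (intro SUP_least ennreal_leI sn)
  then obtain y where y: "(SUP n. ennreal (s n)) = ennreal y" "y \<ge> 0" "y \<le> r powr (1/p)"
    by (cases "(SUP n. ennreal (s n))") (auto simp: ennreal_le_iff top_unique)
  have "y powr p \<le> (r powr (1/p)) powr p" using y p by (intro powr_mono2) auto
  also have "\<dots> = r" using p r by (simp add: powr_powr)
  finally show ?thesis using y p r by (simp add: ennpow_def ennreal_leI)
qed

lemma superadd_powr:
  fixes a :: "nat \<Rightarrow> real"
  assumes "finite A" "\<And>k. k \<in> A \<Longrightarrow> a k \<ge> 0" "p \<ge> 1"
  shows "(\<Sum>k\<in>A. a k powr p) \<le> (\<Sum>k\<in>A. a k) powr p"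
proof -
  let ?s = "\<Sum>k\<in>A. a k"
  have s0: "?s \<ge> 0" using assms by (simp add: sum_nonneg)
  have ak: "a k \<le> ?s" if "k \<in> A" for k
    using assms that by (intro member_le_sum) auto
  have "a k powr p \<le> a k * ?s powr (p - 1)" if "k \<in> A" for k
  proof (cases "a k = 0")
    case True with assms show ?thesis by simp
  next
    case False
    then have pos: "a k > 0" using assms that by force
    have "a k powr p = a k * a k powr (p - 1)" using pos by (simp add: powr_diff)
    also have "\<dots> \<le> a k * ?s powr (p - 1)"
      using pos ak[OF that] assms by (intro mult_left_mono powr_mono2) auto
    finally show ?thesis .
  qed
  then have "(\<Sum>k\<in>A. a k powr p) \<le> (\<Sum>k\<in>A. a k * ?s powr (p - 1))" by (rule sum_mono)
  also have "\<dots> = ?s * ?s powr (p - 1)" by (simp add: sum_distrib_right)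
  also have "\<dots> = ?s powr p"
  proof (cases "?s = 0")
    case True with assms show ?thesis by simp
  next
    case False with s0 show ?thesis by (simp add: powr_diff)
  qed
  finally show ?thesis .
qed



lemma jensen_weights:
  fixes x w :: "nat \<Rightarrow> real"
  assumes p: "p \<ge> 1" and n: "n > 0" and x: "\<And>k. k < n \<Longrightarrow> x k > 0"
    and w: "\<And>k. k < n \<Longrightarrow> w k > 0" and S1: "(\<Sum>k<n. w k) \<le> 1"
  shows "(\<Sum>k<n. x k) powr p \<le> (\<Sum>k<n. w k powr (1 - p) * x k powr p)"
proof -
  define S where "S = (\<Sum>k<n. w k)"
  have S0: "S > 0" unfolding S_def using n w by (intro sum_pos) auto
  have a1: "(\<Sum>k<n. w k / S) = 1" using S0 by (simp add: S_def flip: sum_divide_distrib)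
  have "(\<Sum>k<n. (w k / S) *\<^sub>R (x k / w k)) powr p \<le> (\<Sum>k<n. (w k / S) * (x k / w k) powr p)"
    using n S0 w x
    by (intro convex_on_sum[OF _ _ powr_convex[OF p] a1]) (auto simp: less_imp_le)
  moreover have "(\<Sum>k<n. (w k / S) *\<^sub>R (x k / w k)) = (\<Sum>k<n. x k) / S"
  proof -
    have wne: "\<And>k. k < n \<Longrightarrow> w k \<noteq> 0" using w by (metis less_irrefl)
    show ?thesis by (auto simp: sum_divide_distrib wne intro!: sum.cong)
  qed
  ultimately have A: "((\<Sum>k<n. x k) / S) powr p \<le> (\<Sum>k<n. (w k / S) * (x k / w k) powr p)" by simp
  have sx: "(\<Sum>k<n. x k) \<ge> 0" using x by (intro sum_nonneg) (auto simp: less_imp_le)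
  have "(\<Sum>k<n. x k) powr p = S powr p * ((\<Sum>k<n. x k) / S) powr p"
    using S0 sx by (simp add: powr_divide)
  also have "\<dots> \<le> S powr p * (\<Sum>k<n. (w k / S) * (x k / w k) powr p)"
    using A by (intro mult_left_mono) auto
  also have "\<dots> = S powr (p - 1) * (\<Sum>k<n. w k * (x k / w k) powr p)"
    using S0 by (simp add: sum_distrib_left powr_diff field_simps)
  also have "\<dots> \<le> 1 * (\<Sum>k<n. w k * (x k / w k) powr p)"
    using S0 S1 p w x less_imp_le[OF w] unfolding S_def[symmetric]
    by (intro mult_right_mono powr_le1 sum_nonneg) (auto intro!: mult_nonneg_nonneg)
  also have "\<dots> = (\<Sum>k<n. w k powr (1 - p) * x k powr p)"
    using w x by (auto intro!: sum.cong simp: powr_divide powr_diff less_imp_le)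
  finally show ?thesis .
qed

locale perp_setup = prob_space M for M :: "'a measure" +
  fixes xi :: "nat \<Rightarrow> 'a \<Rightarrow> real"
  assumes meas[measurable]: "\<And>i. xi i \<in> borel_measurable M"
    and indep: "indep_vars (\<lambda>_. borel) xi UNIV"
    and ident: "\<And>i. distr M borel (xi i) = distr M borel (xi 0)"
    and pos: "\<And>i \<omega>. \<omega> \<in> space M \<Longrightarrow> xi i \<omega> > 0"
begin

lemma same_int:
  fixes g :: "real \<Rightarrow> ennreal"
  assumes [measurable]: "g \<in> borel_measurable borel"
  shows "(\<integral>\<^sup>+\<omega>. g (xi i \<omega>) \<partial>M) = (\<integral>\<^sup>+\<omega>. g (xi 0 \<omega>) \<partial>M)"
proof -
  have "(\<integral>\<^sup>+\<omega>. g (xi i \<omega>) \<partial>M) = (\<integral>\<^sup>+x. g x \<partial>distr M borel (xi i))"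
    by (simp add: nn_integral_distr)
  also have "\<dots> = (\<integral>\<^sup>+x. g x \<partial>distr M borel (xi 0))" using ident[of i] by simp
  also have "\<dots> = (\<integral>\<^sup>+\<omega>. g (xi 0 \<omega>) \<partial>M)" by (simp add: nn_integral_distr)
  finally show ?thesis .
qed

lemma prod_int: "(\<integral>\<^sup>+\<omega>. ennreal (\<Prod>j<k. xi j \<omega> powr q) \<partial>M) = mom M xi q ^ k"
proof -
  have ind: "indep_vars (\<lambda>_. borel) (\<lambda>j \<omega>. ennreal (xi j \<omega> powr q)) {..<k}"
    by (rule indep_vars_subset[OF indep_vars_compose2[OF indep]]) auto
  have "(\<integral>\<^sup>+\<omega>. ennreal (\<Prod>j<k. xi j \<omega> powr q) \<partial>M) = (\<integral>\<^sup>+\<omega>. (\<Prod>j<k. ennreal (xi j \<omega> powr q)) \<partial>M)"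
    by (intro nn_integral_cong) (simp add: prod_ennreal)
  also have "\<dots> = (\<Prod>j<k. \<integral>\<^sup>+\<omega>. ennreal (xi j \<omega> powr q) \<partial>M)"
    using ind by (intro indep_vars_nn_integral) auto
  also have "\<dots> = (\<Prod>j<k. mom M xi q)"
    unfolding mom_def by (intro prod.cong refl same_int) auto
  finally show ?thesis by simp
qed

lemma mom_pos: "mom M xi q > 0"
proof (rule ccontr)
  assume "\<not> mom M xi q > 0"
  then have "(\<integral>\<^sup>+\<omega>. ennreal (xi 0 \<omega> powr q) \<partial>M) = 0" by (simp add: mom_def)
  then have "AE \<omega> in M. ennreal (xi 0 \<omega> powr q) = 0"
    by (subst (asm) nn_integral_0_iff_AE) auto
  moreover have "AE \<omega> in M. ennreal (xi 0 \<omega> powr q) \<noteq> 0"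
  proof (intro AE_I2)
    fix \<omega> assume "\<omega> \<in> space M"
    with pos[of \<omega> 0] show "ennreal (xi 0 \<omega> powr q) \<noteq> 0" by simp
  qed
  ultimately have "AE \<omega> in M. False" by eventually_elim auto
  then show False by simp
qed

lemma indep_var_nn_mult:
  fixes f g :: "'b \<Rightarrow> ennreal"
  assumes ind: "indep_var S X T Y" and [measurable]: "f \<in> borel_measurable S" "g \<in> borel_measurable T"
  shows "(\<integral>\<^sup>+\<omega>. f (X \<omega>) * g (Y \<omega>) \<partial>M) = (\<integral>\<^sup>+\<omega>. f (X \<omega>) \<partial>M) * (\<integral>\<^sup>+\<omega>. g (Y \<omega>) \<partial>M)"
proof -
  have rv[measurable]: "X \<in> measurable M S" "Y \<in> measurable M T"
    using indep_var_rv1[OF ind] indep_var_rv2[OF ind] by auto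
  have eq: "distr M S X \<Otimes>\<^sub>M distr M T Y = distr M (S \<Otimes>\<^sub>M T) (\<lambda>x. (X x, Y x))"
    using ind by (simp add: indep_var_distribution_eq)
  interpret SX: prob_space "distr M S X" by (rule prob_space_distr) simp
  interpret TY: prob_space "distr M T Y" by (rule prob_space_distr) simp
  interpret pair_prob_space "distr M S X" "distr M T Y" ..
  have ms: "sets (distr M S X \<Otimes>\<^sub>M distr M T Y) = sets (S \<Otimes>\<^sub>M T)"
    by (intro sets_pair_measure_cong) auto
  have fm: "(\<lambda>z. f (fst z) * g (snd z)) \<in> borel_measurable (distr M S X \<Otimes>\<^sub>M distr M T Y)"
    unfolding measurable_cong_sets[OF ms refl] by measurable
  have "(\<integral>\<^sup>+\<omega>. f (X \<omega>) * g (Y \<omega>) \<partial>M) = (\<integral>\<^sup>+z. f (fst z) * g (snd z) \<partial>distr M (S \<Otimes>\<^sub>M T) (\<lambda>x. (X x, Y x)))"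
    by (subst nn_integral_distr) auto
  also have "\<dots> = (\<integral>\<^sup>+z. f (fst z) * g (snd z) \<partial>(distr M S X \<Otimes>\<^sub>M distr M T Y))"
    by (simp add: eq)
  also have "\<dots> = (\<integral>\<^sup>+x. \<integral>\<^sup>+y. f x * g y \<partial>distr M T Y \<partial>distr M S X)"
    using TY.nn_integral_fst[of "\<lambda>z. f (fst z) * g (snd z)" "distr M S X"] fm by simp
  also have "\<dots> = (\<integral>\<^sup>+x. f x * (\<integral>\<^sup>+y. g y \<partial>distr M T Y) \<partial>distr M S X)"
    by (subst nn_integral_cmult) auto
  also have "\<dots> = (\<integral>\<^sup>+x. f x \<partial>distr M S X) * (\<integral>\<^sup>+y. g y \<partial>distr M T Y)"
    by (subst nn_integral_multc) auto
  also have "\<dots> = (\<integral>\<^sup>+\<omega>. f (X \<omega>) \<partial>M) * (\<integral>\<^sup>+\<omega>. g (Y \<omega>) \<partial>M)"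
    by (simp add: nn_integral_distr)
  finally show ?thesis .
qed

end


context perp_setup begin

lemma P_pos: "\<omega> \<in> space M \<Longrightarrow> 0 < (\<Prod>j\<in>A. xi j \<omega>)"
  by (cases "finite A") (auto intro!: prod_pos pos)

lemma perp_meas[measurable]: "perp xi \<in> borel_measurable M"
  unfolding perp_def[abs_def] by measurable

lemma perp_ge_partial: "ennreal (\<Sum>k<n. \<Prod>j<k. xi j \<omega>) \<le> perp xi \<omega>" if "\<omega> \<in> space M"
proof -
  have "ennreal (\<Sum>k<n. \<Prod>j<k. xi j \<omega>) = (\<Sum>k<n. ennreal (\<Prod>j<k. xi j \<omega>))"
    using P_pos[OF that] by (subst sum_ennreal) (auto intro: less_imp_le)
  also have "\<dots> \<le> perp xi \<omega>" unfolding perp_def by (intro sum_le_suminf) auto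
  finally show ?thesis .
qed

lemma lower_bound:
  assumes p: "p \<ge> 1"
  shows "(\<Sum>k<n. mom M xi p ^ k) \<le> perp_mom M xi p"
proof -
  have "(\<Sum>k<n. mom M xi p ^ k) = (\<Sum>k<n. \<integral>\<^sup>+\<omega>. ennreal (\<Prod>j<k. xi j \<omega> powr p) \<partial>M)"
    by (simp add: prod_int)
  also have "\<dots> = (\<integral>\<^sup>+\<omega>. (\<Sum>k<n. ennreal (\<Prod>j<k. xi j \<omega> powr p)) \<partial>M)"
    by (subst nn_integral_sum) auto
  also have "\<dots> \<le> perp_mom M xi p"
    unfolding perp_mom_def
  proof (intro nn_integral_mono)
    fix \<omega> assume \<omega>: "\<omega> \<in> space M"
    have P0: "\<And>k. 0 \<le> (\<Prod>j<k. xi j \<omega>)" using P_pos[OF \<omega>] by (auto intro: less_imp_le)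
    have "(\<Sum>k<n. ennreal (\<Prod>j<k. xi j \<omega> powr p)) = ennreal (\<Sum>k<n. (\<Prod>j<k. xi j \<omega>) powr p)"
      by (subst sum_ennreal) (auto simp: prod_powr_distrib intro!: prod_nonneg)
    also have "\<dots> \<le> ennreal ((\<Sum>k<n. \<Prod>j<k. xi j \<omega>) powr p)"
      using P0 p by (intro ennreal_leI superadd_powr) auto
    also have "\<dots> = ennpow (ennreal (\<Sum>k<n. \<Prod>j<k. xi j \<omega>)) p"
      using p P0 by (subst ennpow_ennreal) (auto intro: sum_nonneg)
    also have "\<dots> \<le> ennpow (perp xi \<omega>) p"
      using p by (intro ennpow_mono perp_ge_partial \<omega>) auto
    finally show "(\<Sum>k<n. ennreal (\<Prod>j<k. xi j \<omega> powr p)) \<le> ennpow (perp xi \<omega>) p" .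
  qed
  finally show ?thesis .
qed

lemma infinite_if:
  assumes p: "p \<ge> 1" and m: "mom M xi p \<ge> 1"
  shows "perp_mom M xi p = \<infinity>"
proof (rule ccontr)
  assume "perp_mom M xi p \<noteq> \<infinity>"
  then obtain n where n: "perp_mom M xi p < of_nat n"
    using ennreal_Ex_less_of_nat top.not_eq_extremum by (metis infinity_ennreal_def)
  have "(of_nat n :: ennreal) = (\<Sum>k<n. 1)" by simp
  also have "\<dots> \<le> (\<Sum>k<n. mom M xi p ^ k)" using m by (intro sum_mono one_le_power) auto
  also have "\<dots> \<le> perp_mom M xi p" by (rule lower_bound[OF p])
  finally show False using n by simp
qed

lemma mom_q_lt:
  assumes p: "p \<ge> 1" and m: "mom M xi p < 1" and q: "1 \<le> q" "q \<le> p"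
  shows "mom M xi q < 1"
proof -
  define l where "l = q / p"
  have l: "0 < l" "l \<le> 1" using p q by (auto simp: l_def)
  have pt: "xi 0 \<omega> powr q \<le> l * xi 0 \<omega> powr p + (1 - l)" if "\<omega> \<in> space M" for \<omega>
  proof -
    have x: "xi 0 \<omega> > 0" using pos[OF that] .
    have "(xi 0 \<omega> powr p) powr l * 1 powr (1 - l) \<le> l * xi 0 \<omega> powr p + (1 - l) * 1"
      using l x by (intro Youngs_inequality_0) auto
    then show ?thesis using l p x by (simp add: powr_powr l_def)
  qed
  obtain a where a: "mom M xi p = ennreal a" "0 \<le> a" "a < 1"
    using m by (cases "mom M xi p") (auto simp: ennreal_less_iff)
  have "mom M xi q \<le> (\<integral>\<^sup>+\<omega>. ennreal l * ennreal (xi 0 \<omega> powr p) + ennreal (1 - l) \<partial>M)"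
    unfolding mom_def using pt l
    by (intro nn_integral_mono) (simp add: ennreal_plus[symmetric] ennreal_mult[symmetric] del: ennreal_plus)
  also have "\<dots> = ennreal l * mom M xi p + ennreal (1 - l)"
    unfolding mom_def using l
    by (subst nn_integral_add) (auto simp: nn_integral_cmult emeasure_space_1)
  also have "\<dots> = ennreal (l * a + (1 - l))" using a l by (simp add: ennreal_plus ennreal_mult)
  also have "\<dots> < 1"
  proof -
    have "l * a + (1 - l) < 1" using a l by (smt (verit) mult_less_cancel_left_pos mult_cancel_left1)
    from ennreal_lessI[OF zero_less_one this] show ?thesis by simp
  qed
  finally show ?thesis .
qed

end


context perp_setup begin

lemma upper_bound:
  assumes p: "p \<ge> 1" and mlt: "mom M xi p < 1"
  shows "perp_mom M xi p \<le> ennreal ((1 - enn2real (mom M xi p) powr (1 / p)) powr (- p))"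
proof -
  obtain \<mu> where mu: "mom M xi p = ennreal \<mu>" "0 \<le> \<mu>" "\<mu> < 1"
    using mlt by (cases "mom M xi p") (auto simp: ennreal_less_iff)
  have mu0: "\<mu> > 0" using mom_pos[of p] mu by (auto simp: less_le)
  define m where "m = \<mu> powr (1/p)"
  have m0: "m > 0" using mu0 by (simp add: m_def)
  have m1: "m < 1" using powr_less_mono2[of "1/p" \<mu> 1] mu p by (simp add: m_def)
  have mp: "m powr p = \<mu>" using p mu0 by (simp add: m_def powr_powr)
  define w where "w k = (1 - m) * m ^ k" for k :: nat
  define c where "c k = w k powr (1 - p)" for k :: nat
  have w0: "w k > 0" for k using m0 m1 by (simp add: w_def)
  have wsum: "(\<Sum>k<n. w k) \<le> 1" for n
  proof -
    have "(\<Sum>k<n. w k) = (1 - m) * (\<Sum>k<n. m ^ k)" by (simp add: w_def sum_distrib_left)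
    also have "\<dots> = 1 - m ^ n" using m1 by (simp add: sum_gp_strict)
    finally show ?thesis using m0 by simp
  qed
  define R where "R \<omega> = (\<Sum>k. ennreal (c k * (\<Prod>j<k. xi j \<omega> powr p)))" for \<omega>
  have pt: "ennpow (perp xi \<omega>) p \<le> R \<omega>" if \<omega>: "\<omega> \<in> space M" for \<omega>
  proof -
    have P0: "\<And>k. 0 \<le> (\<Prod>j<k. xi j \<omega>)" using P_pos[OF \<omega>] by (auto intro: less_imp_le)
    have "perp xi \<omega> = (SUP n. (\<Sum>k<n. ennreal (\<Prod>j<k. xi j \<omega>)))"
      unfolding perp_def by (rule suminf_eq_SUP)
    also have "\<dots> = (SUP n. ennreal (\<Sum>k<n. \<Prod>j<k. xi j \<omega>))"
      using P0 by (subst sum_ennreal) auto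
    finally have eq: "perp xi \<omega> = \<dots>" .
    show ?thesis unfolding eq
    proof (rule ennpow_SUP_le)
      show "p > 0" using p by simp
      show "0 \<le> (\<Sum>k<n. \<Prod>j<k. xi j \<omega>)" for n using P0 by (intro sum_nonneg) auto
      fix n
      have "(\<Sum>k<n. \<Prod>j<k. xi j \<omega>) powr p \<le> (\<Sum>k<n. c k * (\<Prod>j<k. xi j \<omega> powr p))"
      proof (cases "n = 0")
        case True then show ?thesis by simp
      next
        case False
        have "(\<Sum>k<n. \<Prod>j<k. xi j \<omega>) powr p \<le> (\<Sum>k<n. w k powr (1 - p) * (\<Prod>j<k. xi j \<omega>) powr p)"
          using False by (intro jensen_weights p P_pos[OF \<omega>] w0 wsum) auto
        then show ?thesis by (simp add: c_def prod_powr_distrib)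
      qed
      then have "ennpow (ennreal (\<Sum>k<n. \<Prod>j<k. xi j \<omega>)) p \<le> ennreal (\<Sum>k<n. c k * (\<Prod>j<k. xi j \<omega> powr p))"
        using p P0 by (subst ennpow_ennreal) (auto intro!: ennreal_leI sum_nonneg)
      also have "\<dots> = (\<Sum>k<n. ennreal (c k * (\<Prod>j<k. xi j \<omega> powr p)))"
        by (subst sum_ennreal) (auto simp: c_def intro!: prod_nonneg mult_nonneg_nonneg)
      also have "\<dots> \<le> R \<omega>" unfolding R_def by (intro sum_le_suminf) auto
      finally show "ennpow (ennreal (\<Sum>k<n. \<Prod>j<k. xi j \<omega>)) p \<le> R \<omega>" .
    qed
  qed
  have "perp_mom M xi p \<le> (\<integral>\<^sup>+\<omega>. R \<omega> \<partial>M)"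
    unfolding perp_mom_def by (intro nn_integral_mono pt)
  also have "\<dots> = (\<Sum>k. \<integral>\<^sup>+\<omega>. ennreal (c k * (\<Prod>j<k. xi j \<omega> powr p)) \<partial>M)"
    unfolding R_def by (rule nn_integral_suminf) auto
  also have "\<dots> = (\<Sum>k. ennreal (c k * \<mu> ^ k))"
  proof (intro suminf_cong)
    fix k
    have ck: "c k \<ge> 0" by (simp add: c_def)
    have "(\<integral>\<^sup>+\<omega>. ennreal (c k * (\<Prod>j<k. xi j \<omega> powr p)) \<partial>M)
        = (\<integral>\<^sup>+\<omega>. ennreal (c k) * ennreal (\<Prod>j<k. xi j \<omega> powr p) \<partial>M)"
      using ck by (intro nn_integral_cong) (simp add: ennreal_mult prod_nonneg)
    also have "\<dots> = ennreal (c k) * mom M xi p ^ k"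
      by (subst nn_integral_cmult) (auto simp: prod_int)
    also have "\<dots> = ennreal (c k * \<mu> ^ k)" using ck mu by (simp add: ennreal_mult ennreal_power)
    finally show "(\<integral>\<^sup>+\<omega>. ennreal (c k * (\<Prod>j<k. xi j \<omega> powr p)) \<partial>M) = ennreal (c k * \<mu> ^ k)" .
  qed
  also have "\<dots> = ennreal ((1 - m) powr (1 - p) * (1 / (1 - m)))"
  proof (rule suminf_ennreal_eq)
    show "0 \<le> c k * \<mu> ^ k" for k using mu by (simp add: c_def)
    have eqk: "c k * \<mu> ^ k = (1 - m) powr (1 - p) * m ^ k" for k
    proof -
      have "c k = (1 - m) powr (1 - p) * (m powr real k) powr (1 - p)"
        using m0 m1 by (simp add: c_def w_def powr_mult powr_realpow)
      moreover have "\<mu> ^ k = (m powr p) powr real k" using mp mu0 by (simp add: powr_realpow)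
      ultimately have "c k * \<mu> ^ k = (1 - m) powr (1 - p) * (m powr (real k * (1 - p)) * m powr (p * real k))"
        by (simp add: powr_powr)
      also have "\<dots> = (1 - m) powr (1 - p) * m powr (real k)"
        by (simp add: powr_add[symmetric] algebra_simps)
      finally show ?thesis using m0 by (simp add: powr_realpow)
    qed
    show "(\<lambda>k. c k * \<mu> ^ k) sums ((1 - m) powr (1 - p) * (1 / (1 - m)))"
      unfolding eqk using m0 m1
      by (intro sums_mult geometric_sums) auto
  qed
  also have "(1 - m) powr (1 - p) * (1 / (1 - m)) = (1 - m) powr (- p)"
  proof -
    have "(1 - m) powr (- p) = (1 - m) powr ((1 - p) - 1)" by simp
    also have "\<dots> = (1 - m) powr (1 - p) / (1 - m)" using m1 by (simp only: powr_diff) simp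
    finally show ?thesis by simp
  qed
  finally show ?thesis using mu by (simp add: m_def)
qed

end


definition Gf :: "(nat \<Rightarrow> real) \<Rightarrow> ennreal" where
  "Gf f = (\<Sum>k. ennreal (\<Prod>j<k. f j))"

lemma Gf_meas[measurable]: "Gf \<in> borel_measurable (PiM UNIV (\<lambda>_. borel :: real measure))"
  unfolding Gf_def[abs_def] by measurable

lemma ennreal_suminf_head: "(\<Sum>k. f k) = f 0 + (\<Sum>k. f (Suc k) :: ennreal)"
proof -
  have "(\<lambda>n. f (Suc n)) sums (\<Sum>k. f (Suc k))" by (rule summable_sums) (rule summableI)
  then have "f sums ((\<Sum>k. f (Suc k)) + f 0)" by (rule sums_Suc)
  then show ?thesis by (simp add: sums_unique[symmetric] add.commute)
qed

context perp_setup begin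

lemma perp_split:
  assumes \<omega>: "\<omega> \<in> space M"
  shows "perp xi \<omega> = 1 + ennreal (xi 0 \<omega>) * Gf (\<lambda>i. xi (Suc i) \<omega>)"
proof -
  have "perp xi \<omega> = ennreal (\<Prod>j<0. xi j \<omega>) + (\<Sum>k. ennreal (\<Prod>j<Suc k. xi j \<omega>))"
    unfolding perp_def by (rule ennreal_suminf_head)
  also have "\<dots> = 1 + (\<Sum>k. ennreal (xi 0 \<omega>) * ennreal (\<Prod>j<k. xi (Suc j) \<omega>))"
  proof -
    have sh: "\<And>k. (\<Prod>j<Suc k. xi j \<omega>) = xi 0 \<omega> * (\<Prod>j<k. xi (Suc j) \<omega>)"
      by (rule prod.lessThan_Suc_shift)
    show ?thesis
      using pos[OF \<omega>] by (simp only: sh) (simp add: ennreal_mult less_imp_le prod_nonneg)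
  qed
  also have "\<dots> = 1 + ennreal (xi 0 \<omega>) * Gf (\<lambda>i. xi (Suc i) \<omega>)"
    by (simp add: Gf_def)
  finally show ?thesis .
qed

lemma perp_Gf: "perp xi \<omega> = Gf (\<lambda>i. xi i \<omega>)"
  by (simp add: perp_def Gf_def)

lemma indep_head_tail:
  "indep_var (PiM UNIV (\<lambda>_. borel)) (\<lambda>\<omega> (i::nat). xi 0 \<omega>)
             (PiM UNIV (\<lambda>_. borel)) (\<lambda>\<omega> i. xi (Suc i) \<omega>)"
proof -
  have "indep_var (PiM {0} (\<lambda>_. borel)) (\<lambda>\<omega>. restrict (\<lambda>i. xi i \<omega>) {0})
                  (PiM (range Suc) (\<lambda>_. borel)) (\<lambda>\<omega>. restrict (\<lambda>i. xi i \<omega>) (range Suc))"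
    by (rule indep_var_restrict[OF indep]) auto
  moreover have "(\<lambda>f. \<lambda>i::nat. f (0::nat)) \<in> measurable (PiM {0} (\<lambda>_. borel)) (PiM UNIV (\<lambda>_. borel :: real measure))"
    by (rule measurable_PiM_single') auto
  moreover have "(\<lambda>f. \<lambda>i::nat. f (Suc i)) \<in> measurable (PiM (range Suc) (\<lambda>_. borel)) (PiM UNIV (\<lambda>_. borel :: real measure))"
    by (rule measurable_PiM_single') auto
  ultimately have "indep_var (PiM UNIV (\<lambda>_. borel)) ((\<lambda>f. \<lambda>i::nat. f (0::nat)) \<circ> (\<lambda>\<omega>. restrict (\<lambda>i. xi i \<omega>) {0}))
             (PiM UNIV (\<lambda>_. borel)) ((\<lambda>f. \<lambda>i::nat. f (Suc i)) \<circ> (\<lambda>\<omega>. restrict (\<lambda>i. xi i \<omega>) (range Suc)))"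
    by (rule indep_var_compose)
  then show ?thesis by (simp add: comp_def)
qed

lemma tail_same:
  assumes F[measurable]: "F \<in> borel_measurable (PiM UNIV (\<lambda>_. borel :: real measure))"
  shows "(\<integral>\<^sup>+\<omega>. F (\<lambda>i. xi (Suc i) \<omega>) \<partial>M) = (\<integral>\<^sup>+\<omega>. F (\<lambda>i. xi i \<omega>) \<partial>M)"
proof -
  let ?PB = "PiM UNIV (\<lambda>_. borel :: real measure)"
  let ?nu = "distr M borel (xi 0)"
  let ?P = "PiM UNIV (\<lambda>_::nat. ?nu)"
  have Xm[measurable]: "(\<lambda>\<omega> i. xi i \<omega>) \<in> measurable M ?PB"
    by (rule measurable_PiM_single') auto
  have "distr M ?PB (\<lambda>x. \<lambda>i\<in>UNIV. xi i x) = (\<Pi>\<^sub>M i\<in>UNIV. distr M borel (xi i))"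
    by (rule indep_vars_iff_distr_eq_PiM[THEN iffD1, OF _ _ indep]) auto
  then have dX: "distr M ?PB (\<lambda>\<omega> i. xi i \<omega>) = ?P"
  proof -
    have e1: "(\<lambda>i. distr M borel (xi i)) = (\<lambda>_. ?nu)" using ident by auto
    have e2: "(\<lambda>x. \<lambda>i\<in>UNIV. xi i x) = (\<lambda>\<omega> i. xi i \<omega>)" by (simp add: restrict_UNIV)
    show ?thesis using \<open>distr M ?PB (\<lambda>x. \<lambda>i\<in>UNIV. xi i x) = (\<Pi>\<^sub>M i\<in>UNIV. distr M borel (xi i))\<close>
      unfolding e1 e2 .
  qed
  have sP: "sets ?P = sets ?PB" by (intro sets_PiM_cong) auto
  have Fm: "F \<in> borel_measurable ?P" unfolding measurable_cong_sets[OF sP refl] by simp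
  have shm: "(\<lambda>\<omega>. \<lambda>n\<in>UNIV. \<omega> (Suc n)) \<in> measurable ?P ?P"
    unfolding measurable_cong_sets[OF sP sP] by (rule measurable_PiM_single') auto
  have shm': "(\<lambda>\<omega> n. \<omega> (Suc n)) \<in> measurable ?PB ?PB"
    by (rule measurable_PiM_single') auto
  have nu: "prob_space ?nu" by (rule prob_space_distr) simp
  have "(\<integral>\<^sup>+\<omega>. F (\<lambda>i. xi (Suc i) \<omega>) \<partial>M) = (\<integral>\<^sup>+f. F (\<lambda>i. f (Suc i)) \<partial>distr M ?PB (\<lambda>\<omega> i. xi i \<omega>))"
    using shm' by (subst nn_integral_distr) (auto intro: measurable_compose)
  also have "\<dots> = (\<integral>\<^sup>+f. F (\<lambda>i. f (Suc i)) \<partial>?P)" by (simp add: dX)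
  also have "\<dots> = (\<integral>\<^sup>+f. F f \<partial>distr ?P ?P (\<lambda>\<omega>. \<lambda>n\<in>UNIV. \<omega> (Suc n)))"
    using shm Fm by (subst nn_integral_distr) (auto simp: restrict_UNIV)
  also have "distr ?P ?P (\<lambda>\<omega>. \<lambda>n\<in>UNIV. \<omega> (Suc n)) = ?P"
    using distr_PiM_reindex[of UNIV "\<lambda>_. ?nu" Suc UNIV] nu by simp
  also have "(\<integral>\<^sup>+f. F f \<partial>?P) = (\<integral>\<^sup>+f. F f \<partial>distr M ?PB (\<lambda>\<omega> i. xi i \<omega>))" by (simp add: dX)
  also have "\<dots> = (\<integral>\<^sup>+\<omega>. F (\<lambda>i. xi i \<omega>) \<partial>M)" by (subst nn_integral_distr) auto
  finally show ?thesis .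
qed

end


context perp_setup begin

lemma head_mom: "(\<integral>\<^sup>+\<omega>. ennreal (xi 0 \<omega>) ^ k \<partial>M) = mom M xi (real k)"
  unfolding mom_def
  by (intro nn_integral_cong) (simp add: ennreal_power less_imp_le pos powr_realpow)

lemma tail_mom: "(\<integral>\<^sup>+\<omega>. Gf (\<lambda>i. xi (Suc i) \<omega>) ^ k \<partial>M) = perp_mom M xi (real k)"
proof -
  have "(\<integral>\<^sup>+\<omega>. Gf (\<lambda>i. xi (Suc i) \<omega>) ^ k \<partial>M) = (\<integral>\<^sup>+\<omega>. Gf (\<lambda>i. xi i \<omega>) ^ k \<partial>M)"
    by (rule tail_same[where F="\<lambda>v. Gf v ^ k"]) measurable
  then show ?thesis by (simp add: perp_mom_def ennpow_nat perp_Gf)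
qed

lemma prod_term: "(\<integral>\<^sup>+\<omega>. (ennreal (xi 0 \<omega>) * Gf (\<lambda>i. xi (Suc i) \<omega>)) ^ k \<partial>M)
    = mom M xi (real k) * perp_mom M xi (real k)"
proof -
  have "(\<integral>\<^sup>+\<omega>. (ennreal (xi 0 \<omega>) * Gf (\<lambda>i. xi (Suc i) \<omega>)) ^ k \<partial>M)
      = (\<integral>\<^sup>+\<omega>. (\<lambda>v. ennreal (v 0) ^ k) (\<lambda>i::nat. xi 0 \<omega>) * (\<lambda>v. Gf v ^ k) (\<lambda>i. xi (Suc i) \<omega>) \<partial>M)"
    by (simp add: power_mult_distrib)
  also have "\<dots> = (\<integral>\<^sup>+\<omega>. (\<lambda>v. ennreal (v 0) ^ k) (\<lambda>i::nat. xi 0 \<omega>) \<partial>M) * (\<integral>\<^sup>+\<omega>. (\<lambda>v. Gf v ^ k) (\<lambda>i. xi (Suc i) \<omega>) \<partial>M)"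
    by (rule indep_var_nn_mult[OF indep_head_tail]) measurable
  also have "\<dots> = mom M xi (real k) * perp_mom M xi (real k)"
    using head_mom tail_mom by simp
  finally show ?thesis .
qed

lemma Zm[measurable]: "(\<lambda>\<omega> i. xi (Suc i) \<omega>) \<in> measurable M (PiM UNIV (\<lambda>_. borel :: real measure))"
  by (rule measurable_PiM_single') auto

lemma recursion:
  "perp_mom M xi (real n) = (\<Sum>k\<le>n. of_nat (n choose k) * (mom M xi (real k) * perp_mom M xi (real k)))"
proof -
  have "perp_mom M xi (real n) = (\<integral>\<^sup>+\<omega>. (ennreal (xi 0 \<omega>) * Gf (\<lambda>i. xi (Suc i) \<omega>) + 1) ^ n \<partial>M)"
    unfolding perp_mom_def ennpow_nat
    by (intro nn_integral_cong) (simp add: perp_split add.commute)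
  also have "\<dots> = (\<integral>\<^sup>+\<omega>. (\<Sum>k\<le>n. of_nat (n choose k) * (ennreal (xi 0 \<omega>) * Gf (\<lambda>i. xi (Suc i) \<omega>)) ^ k) \<partial>M)"
    by (simp add: binomial_ring)
  also have "\<dots> = (\<Sum>k\<le>n. \<integral>\<^sup>+\<omega>. of_nat (n choose k) * (ennreal (xi 0 \<omega>) * Gf (\<lambda>i. xi (Suc i) \<omega>)) ^ k \<partial>M)"
    by (rule nn_integral_sum) measurable
  also have "\<dots> = (\<Sum>k\<le>n. of_nat (n choose k) * (mom M xi (real k) * perp_mom M xi (real k)))"
    by (intro sum.cong refl, subst nn_integral_cmult) (auto simp: prod_term)
  finally show ?thesis .
qed

end


theorem theorem2:
  fixes M :: "'a measure" and xi :: "nat \<Rightarrow> 'a \<Rightarrow> real" and p :: real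
  assumes "prob_space M"
    and "\<And>i. xi i \<in> borel_measurable M"
    and "prob_space.indep_vars M (\<lambda>_. borel) xi UNIV"
    and "\<And>i. distr M borel (xi i) = distr M borel (xi 0)"
    and "\<And>i \<omega>. \<omega> \<in> space M \<Longrightarrow> xi i \<omega> > 0"
    and "p \<ge> 1"
  shows "(perp_mom M xi p < \<infinity> \<longleftrightarrow> mom M xi p < 1)
    \<and> (mom M xi p < 1 \<longrightarrow>
         (\<forall>q. 1 \<le> q \<and> q \<le> p \<longrightarrow> mom M xi q < 1)
       \<and> perp_mom M xi p \<le> ennreal ((1 - enn2real (mom M xi p) powr (1 / p)) powr (- p))
       \<and> (\<forall>n::nat. p = real n \<longrightarrow>
            perp_mom M xi p = (1 / (1 - mom M xi p)) *
              (\<Sum>k<n. of_nat (n choose k) * mom M xi (real k) * perp_mom M xi (real k))))"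
proof -
  interpret P: perp_setup M xi
    by (rule perp_setup.intro[OF assms(1)], unfold_locales) (use assms in auto)
  have p: "p \<ge> 1" by fact
  have iff: "perp_mom M xi p < \<infinity> \<longleftrightarrow> mom M xi p < 1"
  proof
    assume "perp_mom M xi p < \<infinity>"
    then show "mom M xi p < 1" using P.infinite_if[OF p] by (metis not_less less_irrefl)
  next
    assume "mom M xi p < 1"
    from P.upper_bound[OF p this] show "perp_mom M xi p < \<infinity>"
      by (metis ennreal_less_top infinity_ennreal_def le_less_trans)
  qed
  have rec: "perp_mom M xi p = (1 / (1 - mom M xi p)) *
              (\<Sum>k<n. of_nat (n choose k) * mom M xi (real k) * perp_mom M xi (real k))"
    if m: "mom M xi p < 1" and pn: "p = real n" for n :: nat
  proof -
    define A where "A = perp_mom M xi p"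
    define S where "S = (\<Sum>k<n. of_nat (n choose k) * mom M xi (real k) * perp_mom M xi (real k))"
    have Afin: "A < \<infinity>" using iff m by (simp add: A_def)
    have eq: "A = S + mom M xi p * A"
      using P.recursion[of n] unfolding A_def S_def pn
      by (simp add: lessThan_Suc_atMost[symmetric] mult.assoc)
    then have "S \<le> A" by (metis le_iff_add)
    then have Sfin: "S < \<infinity>" using Afin by (metis le_less_trans)
    obtain a where a: "A = ennreal a" "0 \<le> a" using Afin by (cases A) auto
    obtain s where s: "S = ennreal s" "0 \<le> s" using Sfin by (cases S) auto
    obtain b where b: "mom M xi p = ennreal b" "0 \<le> b" "b < 1"
      using m by (cases "mom M xi p") (auto simp: ennreal_less_iff)
    have "ennreal a = ennreal (s + b * a)" using eq a s b by (simp add: ennreal_plus ennreal_mult)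
    moreover have "0 \<le> s + b * a" using a s b by simp
    ultimately have "a = s + b * a" using a(2) ennreal_inj by blast
    then have aeq: "a = s / (1 - b)" using b by (simp add: field_simps)
    have "(1 / (1 - mom M xi p)) * S = ennreal (1 / (1 - b)) * ennreal s"
    proof -
      have h1: "1 - ennreal b = ennreal (1 - b)" using b ennreal_minus[of b 1] by simp
      have h2: "1 / ennreal (1 - b) = ennreal (1 / (1 - b))" using b divide_ennreal[of 1 "1 - b"] by simp
      show ?thesis using b s by (simp add: h1 h2)
    qed
    also have "\<dots> = ennreal a" using aeq b s by (simp add: ennreal_mult[symmetric])
    finally show ?thesis using a unfolding A_def S_def by simp
  qed
  show ?thesis
    using iff P.upper_bound[OF p] P.mom_q_lt[OF p] rec by blast
qed


end
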